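(* Let $\gamma:[0,1]\to\mathbb{R}^2$ be a $C^1$ curve of constant speed $c>0$ which is not closed ($\gamma(0)\neq\gamma(1)$), whose turning angle function $\theta$ satisfies $\theta(1)-\theta(0)=2\pi m$ with $0\neq m\in\mathbb{Z}$. Let $k\ge 3$ and $\sigma\in S_k$. Then there exist cuts $C\in\operatorname{int}(D_k)$ such that the rearranged curve $r_{\sigma,C}$ is a closed $C^1$ curve if and only if $\sigma\in S_k\setminus Z_k$, i.e. $\sigma$ is not a cyclic shift.
   Context: A turning angle function is a continuous $\theta$ with $\gamma'(s)=c(\cos\theta(s),\sin\theta(s))$. Concatenation $\alpha*\beta$ of two $C^1$ planar curves of the same constant speed ($\alpha$ on $[a_1,b_1]$, $\beta$ on $[a_2,b_2]$) is the curve on $[0,(b_1-a_1)+(b_2-a_2)]$ equal to $\alpha(s+a_1)$ for $s\le b_1-a_1$ and to $T(\beta(s-(b_1-a_1)+a_2))$ afterwards, where $T$ is the orientation-preserving rigid motion sending $\beta(a_2)$ to $\alpha(b_1)$ and the unit tangent of $\beta$ at $a_2$ to that of $\alpha$ at $b_1$; it is associative. Let $D_k=\{(c_1,\dots,c_{k-1})\in[0,1]^{k-1}: 0\le c_1\le\dots\le c_{k-1}\le 1\}$, with interior $\operatorname{int}(D_k)$ in $\mathbb{R}^{k-1}$; set $c_0=0$, $c_k=1$. For $C\in D_k$ let $\gamma_i$ be the restriction of $\gamma$ to $[c_{i-1},c_i]$, $i=1,\dots,k$ (a degenerate arc is a point carrying the tangent direction of $\gamma$ there). For $\sigma\in S_k$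 (permutations of $\{1,\dots,k\}$), $r_{\sigma,C}:=\gamma_{\sigma(1)}*\gamma_{\sigma(2)}*\dots*\gamma_{\sigma(k)}$, parametrized over $[0,1]$ (and moved by a rigid motion to start at the origin with initial tangent along the positive $x$-axis). A closed $C^1$ curve means $r_{\sigma,C}(0)=r_{\sigma,C}(1)$ and equal tangents there. $Z_k=\{z_0,\dots,z_{k-1}\}\subseteq S_k$ is the subgroup of cyclic shifts, $z_h(i)=i+h$ if $i\le k-h$ and $z_h(i)=i+h-k$ if $i>k-h$. *)

theory Defs
  imports "HOL-Analysis.Analysis" "HOL-Combinatorics.Permutations"
begin

text \<open>The plane R^2 is identified with the complex numbers. A (parametrized) curve
  piece is a triple (f, a, b): the map f restricted to the interval [a,b].\<close>

type_synonym pcurve = "(real \<Rightarrow> complex) \<times> real \<times> real"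

definition unit_tangent_start :: "pcurve \<Rightarrow> complex" where
  "unit_tangent_start \<alpha> = (case \<alpha> of (f, a, b) \<Rightarrow> sgn (vector_derivative f (at a within {a..b})))"

definition unit_tangent_end :: "pcurve \<Rightarrow> complex" where
  "unit_tangent_end \<alpha> = (case \<alpha> of (f, a, b) \<Rightarrow> sgn (vector_derivative f (at b within {a..b})))"

text \<open>Concatenation alpha * beta: beta is moved by the orientation-preserving rigid motion T
  sending beta(a2) to alpha(b1) and the unit tangent of beta at a2 to that of alpha at b1.\<close>
definition concat :: "pcurve \<Rightarrow> pcurve \<Rightarrow> pcurve" where
  "concat \<alpha> \<beta> = (case \<alpha> of (f1, a1, b1) \<Rightarrow> case \<beta> of (f2, a2, b2) \<Rightarrow>
     (let u = unit_tangent_end \<alpha> / unit_tangent_start \<beta>;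
          T = (\<lambda>z. f1 b1 + u * (z - f2 a2))
      in (\<lambda>s. if s \<le> b1 - a1 then f1 (s + a1) else T (f2 (s - (b1 - a1) + a2)),
          0, (b1 - a1) + (b2 - a2))))"

definition sub_arc :: "(real \<Rightarrow> complex) \<Rightarrow> (nat \<Rightarrow> real) \<Rightarrow> nat \<Rightarrow> pcurve" where
  "sub_arc \<gamma> C i = (\<gamma>, C (i - 1), C i)"

text \<open>r_{sigma,C} = gamma_sigma(1) * ... * gamma_sigma(k), moved by a rigid motion to start at
  the origin with initial tangent along the positive x-axis.\<close>
definition rearranged :: "(real \<Rightarrow> complex) \<Rightarrow> nat \<Rightarrow> (nat \<Rightarrow> nat) \<Rightarrow> (nat \<Rightarrow> real) \<Rightarrow> real \<Rightarrow> complex" where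
  "rearranged \<gamma> k \<sigma> C =
     (case foldl concat (sub_arc \<gamma> C (\<sigma> 1)) (map (\<lambda>j. sub_arc \<gamma> C (\<sigma> j)) [2..<Suc k]) of
       (f, a, b) \<Rightarrow> (\<lambda>s. (f s - f a) * cnj (sgn (vector_derivative f (at a within {a..b})))))"

definition closed_C1 :: "(real \<Rightarrow> complex) \<Rightarrow> bool" where
  "closed_C1 r \<longleftrightarrow> r 0 = r 1 \<and>
     vector_derivative r (at 0 within {0..1}) = vector_derivative r (at 1 within {0..1})"

definition is_cyclic_shift :: "nat \<Rightarrow> (nat \<Rightarrow> nat) \<Rightarrow> bool" where
  "is_cyclic_shift k \<sigma> \<longleftrightarrow>
     (\<exists>h<k. \<forall>i\<in>{1..k}. \<sigma> i = (if i \<le> k - h then i + h else i + h - k))"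

end

theory Submission
  imports Defs
begin
lemma ute: "a < b \<Longrightarrow> (f has_vector_derivative d1) (at b within {a..b}) \<Longrightarrow> unit_tangent_end (f,a,b) = sgn d1"
  using vector_derivative_within_cbox[of a b b f d1] by (simp add: unit_tangent_end_def)
lemma uts: "a < b \<Longrightarrow> (f has_vector_derivative d1) (at a within {a..b}) \<Longrightarrow> unit_tangent_start (f,a,b) = sgn d1"
  using vector_derivative_within_cbox[of a b a f d1] by (simp add: unit_tangent_start_def)

lemma concat_eq: "concat (f,a,b) (\<gamma>,s',e') = ((\<lambda>s. if s \<le> b - a then f (s + a) else f b + (unit_tangent_end (f,a,b) / unit_tangent_start (\<gamma>,s',e')) * (\<gamma> (s - (b - a) + s') - \<gamma> s')), 0, (b-a)+(e'-s'))"
  unfolding concat_def Let_def by simp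

lemma deriv_start:
  fixes f g :: "real \<Rightarrow> complex"
  assumes ab: "a < b" and d0: "(f has_vector_derivative d0) (at a within {a..b})"
    and eq: "\<And>s. 0 \<le> s \<Longrightarrow> s \<le> b - a \<Longrightarrow> g s = f (s + a)" and L: "b - a \<le> L"
  shows "(g has_vector_derivative d0) (at 0 within {0..L})"
proof -
  have e: "(\<lambda>s. s + a) ` {0..b-a} = {a..b}"
  proof (rule set_eqI, rule iffI)
    fix y assume "y \<in> {a..b}"
    then show "y \<in> (\<lambda>s. s + a) ` {0..b-a}"
      by (intro image_eqI[where x="y - a"]) auto
  qed auto
  have 1: "((\<lambda>s. s + a) has_vector_derivative 1) (at 0 within {0..b-a})"
    by (auto intro!: derivative_eq_intros)
  have "(f has_vector_derivative d0) (at ((\<lambda>s. s + a) 0) within (\<lambda>s. s + a) ` {0..b-a})"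
    using d0 e by simp
  from vector_diff_chain_within[OF 1 this]
  have "((\<lambda>s. f (s + a)) has_vector_derivative d0) (at 0 within {0..b-a})"
    by (simp add: o_def)
  then have "(g has_vector_derivative d0) (at 0 within {0..b-a})"
    by (rule has_vector_derivative_transform_within[where d=1]) (use ab eq in auto)
  moreover have "at 0 within {0..L} = at 0 within {0..b-a}"
  proof (rule at_within_nhd[where S="{..<b-a}"])
    show "{0..L} \<inter> {..<b - a} - {0} = {0..b - a} \<inter> {..<b - a} - {0}"
      using L by auto
  qed (use ab in auto)
  ultimately show ?thesis by simp
qed

lemma deriv_end:
  fixes \<gamma> g :: "real \<Rightarrow> complex"
  assumes ab: "0 < l" and se: "s' < e'" "0 \<le> s'" "e' \<le> 1"
    and g1: "\<forall>s\<in>{0..1}. (\<gamma> has_vector_derivative \<gamma>' s) (at s within {0..1})"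
    and eq: "\<And>s. l < s \<Longrightarrow> g s = P + u * (\<gamma> (s - l + s') - \<gamma> s')"
  shows "(g has_vector_derivative (u * \<gamma>' e')) (at (l + (e'-s')) within {0..l + (e'-s')})"
proof -
  define L where "L = l + (e'-s')"
  define h where "h = (\<lambda>s. u * (\<gamma> (s - l + s') - \<gamma> s') + P)"
  have e: "(\<lambda>s. s - l + s') ` {l..L} = {s'..e'}"
  proof (rule set_eqI, rule iffI)
    fix y assume "y \<in> {s'..e'}"
    then show "y \<in> (\<lambda>s. s - l + s') ` {l..L}"
      by (intro image_eqI[where x="y + l - s'"]) (auto simp: L_def)
  qed (auto simp: L_def)
  have 1: "((\<lambda>s. s - l + s') has_vector_derivative 1) (at L within {l..L})"
    by (rule derivative_eq_intros refl)+ simp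
  have "(\<gamma> has_vector_derivative \<gamma>' e') (at e' within {s'..e'})"
  proof -
    have "e' \<in> {0..1}" using se by auto
    then have "(\<gamma> has_vector_derivative \<gamma>' e') (at e' within {0..1})" using g1 by blast
    then show ?thesis by (rule has_vector_derivative_within_subset) (use se in auto)
  qed
  then have "(\<gamma> has_vector_derivative \<gamma>' e') (at ((\<lambda>s. s - l + s') L) within (\<lambda>s. s - l + s') ` {l..L})"
    using e by (simp add: L_def)
  from vector_diff_chain_within[OF 1 this]
  have "((\<lambda>s. \<gamma> (s - l + s')) has_vector_derivative \<gamma>' e') (at L within {l..L})"
    by (simp add: o_def)
  then have "((\<lambda>s. \<gamma> (s - l + s') - \<gamma> s') has_vector_derivative \<gamma>' e') (at L within {l..L})"
    by (subst has_vector_derivative_diff_const)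
  then have "((\<lambda>s. u * (\<gamma> (s - l + s') - \<gamma> s')) has_vector_derivative u * \<gamma>' e') (at L within {l..L})"
    by (rule has_vector_derivative_mult_right)
  then have "(h has_vector_derivative (u * \<gamma>' e')) (at L within {l..L})"
    unfolding h_def by (subst has_vector_derivative_add_const)
  then have "(g has_vector_derivative (u * \<gamma>' e')) (at L within {l..L})"
  proof (rule has_vector_derivative_transform_within[where d="e'-s'"])
    fix x' assume "x' \<in> {l..L}" "dist x' L < e' - s'"
    then have "l < x'" by (auto simp: L_def dist_real_def)
    then show "h x' = g x'" using eq[of x'] by (simp add: h_def)
  qed (use se in \<open>auto simp: L_def\<close>)
  moreover have "at L within {0..L} = at L within {l..L}"
  proof (rule at_within_nhd[where S="{l<..}"])
    show "{0..L} \<inter> {l<..} - {L} = {l..L} \<inter> {l<..} - {L}"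
      using ab by (simp add: set_eq_iff) (meson less_le_not_le order.strict_trans1 less_imp_le)
  qed (use ab se in \<open>auto simp: L_def\<close>)
  ultimately show ?thesis by (simp add: L_def)
qed

definition Dth :: "(real \<Rightarrow> real) \<Rightarrow> (nat \<Rightarrow> real) \<Rightarrow> nat \<Rightarrow> real" where
  "Dth \<theta> C i = \<theta> (C i) - \<theta> (C (i - 1))"
definition Dg :: "(real \<Rightarrow> complex) \<Rightarrow> (nat \<Rightarrow> real) \<Rightarrow> nat \<Rightarrow> complex" where
  "Dg \<gamma> C i = \<gamma> (C i) - \<gamma> (C (i - 1))"
definition Aang :: "(real \<Rightarrow> real) \<Rightarrow> (nat \<Rightarrow> real) \<Rightarrow> (nat \<Rightarrow> nat) \<Rightarrow> nat \<Rightarrow> real" where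
  "Aang \<theta> C \<sigma> j = (\<Sum>l=1..<j. Dth \<theta> C (\<sigma> l))"
definition Nsum :: "(real \<Rightarrow> complex) \<Rightarrow> (real \<Rightarrow> real) \<Rightarrow> (nat \<Rightarrow> real) \<Rightarrow> (nat \<Rightarrow> nat) \<Rightarrow> nat \<Rightarrow> complex" where
  "Nsum \<gamma> \<theta> C \<sigma> j = (\<Sum>l=1..j. cis (Aang \<theta> C \<sigma> l - \<theta> (C (\<sigma> l - 1))) * Dg \<gamma> C (\<sigma> l))"
definition Acc :: "(real \<Rightarrow> complex) \<Rightarrow> (nat \<Rightarrow> real) \<Rightarrow> (nat \<Rightarrow> nat) \<Rightarrow> nat \<Rightarrow> pcurve" where
  "Acc \<gamma> C \<sigma> j = foldl concat (sub_arc \<gamma> C (\<sigma> 1)) (map (\<lambda>j. sub_arc \<gamma> C (\<sigma> j)) [2..<Suc j])"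

lemma Aang_Suc: "j \<ge> 1 \<Longrightarrow> Aang \<theta> C \<sigma> (Suc j) = Aang \<theta> C \<sigma> j + Dth \<theta> C (\<sigma> j)"
  by (simp add: Aang_def)
lemma Aang_1: "Aang \<theta> C \<sigma> 1 = 0" by (simp add: Aang_def)
lemma Nsum_Suc: "Nsum \<gamma> \<theta> C \<sigma> (Suc j) = Nsum \<gamma> \<theta> C \<sigma> j + cis (Aang \<theta> C \<sigma> (Suc j) - \<theta> (C (\<sigma> (Suc j) - 1))) * Dg \<gamma> C (\<sigma> (Suc j))"
  by (simp add: Nsum_def)
lemma Nsum_0: "Nsum \<gamma> \<theta> C \<sigma> 0 = 0" by (simp add: Nsum_def)

lemma Acc_1: "Acc \<gamma> C \<sigma> 1 = (\<gamma>, C (\<sigma> 1 - 1), C (\<sigma> 1))"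
  by (simp add: Acc_def sub_arc_def)
lemma Acc_Suc: "j \<ge> 1 \<Longrightarrow> Acc \<gamma> C \<sigma> (Suc j) = concat (Acc \<gamma> C \<sigma> j) (\<gamma>, C (\<sigma> (Suc j) - 1), C (\<sigma> (Suc j)))"
  by (simp add: Acc_def upt_Suc_append sub_arc_def)

lemma sgn_c_cis: "c > 0 \<Longrightarrow> sgn (complex_of_real c * cis x) = cis x"
  by (simp add: sgn_mult sgn_of_real)

lemma acc_inv:
  fixes \<gamma> \<gamma>' :: "real \<Rightarrow> complex" and \<theta> :: "real \<Rightarrow> real" and C :: "nat \<Rightarrow> real"
  assumes g1: "\<forall>s\<in>{0..1}. (\<gamma> has_vector_derivative \<gamma>' s) (at s within {0..1})"
    and th: "\<forall>s\<in>{0..1}. \<gamma>' s = complex_of_real c * cis (\<theta> s)" and c: "c > 0"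
    and Cok: "\<And>l. l \<in> {1..k} \<Longrightarrow> 0 \<le> C (\<sigma> l - 1) \<and> C (\<sigma> l - 1) < C (\<sigma> l) \<and> C (\<sigma> l) \<le> 1"
    and j: "1 \<le> j" "j \<le> k"
  defines "S1 \<equiv> C (\<sigma> 1 - 1)"
  shows "\<exists>f a b. Acc \<gamma> C \<sigma> j = (f,a,b) \<and> a < b \<and> (2 \<le> j \<longrightarrow> a = 0)
     \<and> b - a = (\<Sum>l=1..j. C (\<sigma> l) - C (\<sigma> l - 1)) \<and> f a = \<gamma> S1
     \<and> (f has_vector_derivative \<gamma>' S1) (at a within {a..b})
     \<and> f b = \<gamma> S1 + cis (\<theta> S1) * Nsum \<gamma> \<theta> C \<sigma> j
     \<and> (f has_vector_derivative (complex_of_real c * cis (\<theta> S1 + Aang \<theta> C \<sigma> (Suc j)))) (at b within {a..b})"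
  using j
proof (induction j rule: nat_induct_at_least)
  case base
  have C1: "0 \<le> S1" "S1 < C (\<sigma> 1)" "C (\<sigma> 1) \<le> 1" using Cok[of 1] base by (auto simp: S1_def)
  have d: "(\<gamma> has_vector_derivative \<gamma>' s) (at s within {S1..C (\<sigma> 1)})" if "s \<in> {S1..C (\<sigma> 1)}" for s
  proof -
    have "s \<in> {0..1}" using that C1 by auto
    then have "(\<gamma> has_vector_derivative \<gamma>' s) (at s within {0..1})" using g1 by blast
    then show ?thesis by (rule has_vector_derivative_within_subset) (use C1 in auto)
  qed
  have "\<gamma>' (C (\<sigma> 1)) = complex_of_real c * cis (\<theta> S1 + Aang \<theta> C \<sigma> (Suc 1))"
    using th C1 by (simp add: Aang_def Dth_def S1_def)
  moreover have "\<gamma> (C (\<sigma> 1)) = \<gamma> S1 + cis (\<theta> S1) * Nsum \<gamma> \<theta> C \<sigma> 1"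
    by (simp add: Nsum_def Aang_def Dg_def S1_def flip: mult.assoc add: cis_mult)
  ultimately show ?case unfolding Acc_1 using C1 d[of S1] d[of "C (\<sigma> 1)"]
    by (intro exI[of _ \<gamma>] exI[of _ S1] exI[of _ "C (\<sigma> 1)"]) (simp add: S1_def)
next
  case (Suc j)
  then obtain f a b where fab: "Acc \<gamma> C \<sigma> j = (f,a,b)" "a < b" "2 \<le> j \<longrightarrow> a = 0"
     "b - a = (\<Sum>l=1..j. C (\<sigma> l) - C (\<sigma> l - 1))" "f a = \<gamma> S1"
     "(f has_vector_derivative \<gamma>' S1) (at a within {a..b})"
     "f b = \<gamma> S1 + cis (\<theta> S1) * Nsum \<gamma> \<theta> C \<sigma> j"
     "(f has_vector_derivative (complex_of_real c * cis (\<theta> S1 + Aang \<theta> C \<sigma> (Suc j)))) (at b within {a..b})"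
    by auto
  define s' where "s' = C (\<sigma> (Suc j) - 1)"
  define e' where "e' = C (\<sigma> (Suc j))"
  have se: "0 \<le> s'" "s' < e'" "e' \<le> 1" using Cok[of "Suc j"] Suc by (auto simp: s'_def e'_def)
  have ds': "(\<gamma> has_vector_derivative \<gamma>' s') (at s' within {s'..e'})"
  proof -
    have "s' \<in> {0..1}" using se by auto
    then have "(\<gamma> has_vector_derivative \<gamma>' s') (at s' within {0..1})" using g1 by blast
    then show ?thesis by (rule has_vector_derivative_within_subset) (use se in auto)
  qed
  define A where "A = Aang \<theta> C \<sigma> (Suc j)"
  define u where "u = cis (\<theta> S1 + A - \<theta> s')"
  have ute: "unit_tangent_end (f,a,b) = cis (\<theta> S1 + A)"
    using ute[OF fab(2) fab(8)] c by (simp add: sgn_c_cis A_def)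
  have uts: "unit_tangent_start (\<gamma>,s',e') = cis (\<theta> s')"
    using uts[OF se(2) ds'] c th se by (simp add: sgn_c_cis)
  have uu: "unit_tangent_end (f,a,b) / unit_tangent_start (\<gamma>,s',e') = u"
    unfolding ute uts u_def by (simp add: cis_divide)
  define g where "g = (\<lambda>s. if s \<le> b - a then f (s + a) else f b + u * (\<gamma> (s - (b - a) + s') - \<gamma> s'))"
  have acc: "Acc \<gamma> C \<sigma> (Suc j) = (g, 0, (b-a)+(e'-s'))"
  proof -
    have "Acc \<gamma> C \<sigma> (Suc j) = concat (f,a,b) (\<gamma>,s',e')"
      using Acc_Suc[of j \<gamma> C \<sigma>] Suc(1) fab(1) by (simp add: s'_def e'_def)
    then show ?thesis unfolding concat_eq uu g_def .
  qed
  have "(g has_vector_derivative \<gamma>' S1) (at 0 within {0..(b-a)+(e'-s')})"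
    by (rule deriv_start[OF fab(2) fab(6)]) (use se in \<open>auto simp: g_def\<close>)
  moreover have "(g has_vector_derivative (u * \<gamma>' e')) (at ((b-a)+(e'-s')) within {0..(b-a)+(e'-s')})"
    by (rule deriv_end[OF _ se(2) se(1) se(3) g1]) (use fab(2) in \<open>auto simp: g_def\<close>)
  moreover have "u * \<gamma>' e' = complex_of_real c * cis (\<theta> S1 + Aang \<theta> C \<sigma> (Suc (Suc j)))"
  proof -
    have "\<gamma>' e' = complex_of_real c * cis (\<theta> e')" using th se by auto
    moreover have "Aang \<theta> C \<sigma> (Suc (Suc j)) = A + \<theta> e' - \<theta> s'"
      using Aang_Suc[of "Suc j"] by (simp add: A_def Dth_def s'_def e'_def)
    ultimately have "\<theta> S1 + Aang \<theta> C \<sigma> (Suc (Suc j)) = (\<theta> S1 + A - \<theta> s') + \<theta> e'" and g': "\<gamma>' e' = complex_of_real c * cis (\<theta> e')"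
      by auto
    then show ?thesis unfolding g' u_def by (simp add: cis_mult mult.left_commute) (simp add: algebra_simps)
  qed
  moreover have "g ((b-a)+(e'-s')) = \<gamma> S1 + cis (\<theta> S1) * Nsum \<gamma> \<theta> C \<sigma> (Suc j)"
  proof -
    have "g ((b-a)+(e'-s')) = f b + u * (\<gamma> e' - \<gamma> s')" using se by (simp add: g_def)
    also have "\<dots> = \<gamma> S1 + cis (\<theta> S1) * Nsum \<gamma> \<theta> C \<sigma> (Suc j)"
    proof -
      have cc: "u = cis (\<theta> S1) * cis (A - \<theta> s')" unfolding u_def cis_mult by (simp add: algebra_simps)
      show ?thesis unfolding Nsum_Suc fab(7) cc
        by (simp add: A_def Dg_def s'_def e'_def distrib_left mult.assoc)
    qed
    finally show ?thesis .
  qed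
  moreover have "g 0 = \<gamma> S1" using fab(2) fab(5) by (simp add: g_def)
  moreover have "(b-a)+(e'-s') = (\<Sum>l=1..Suc j. C (\<sigma> l) - C (\<sigma> l - 1))"
    using fab(4) by (simp add: s'_def e'_def)
  moreover have "0 < (b-a)+(e'-s')" using fab(2) se by simp
  ultimately show ?case using acc by auto
qed

lemma telescope: "(\<Sum>i=1..n. F i - F (i - 1)) = F n - (F 0 :: 'a::ab_group_add)" for n :: nat
  by (induction n) (auto simp: sum.atLeast_Suc_atMost)

lemma sum_perm: "\<sigma> permutes {1..k} \<Longrightarrow> (\<Sum>l=1..k. F (\<sigma> l)) = (\<Sum>i=1..k. F i)"
  using sum.reindex_bij_betw[OF permutes_imp_bij, of \<sigma> "{1..k}" F] by simp

lemma C_mono: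
  assumes "\<forall>i<k. C i < C (Suc i)" "i < j" "j \<le> k"
  shows "C i < (C j :: real)"
  using assms(2,3)
proof (induction j)
  case (Suc j)
  then show ?case using assms(1) by (cases "i = j") (auto intro: less_trans)
qed auto

lemma C_range:
  assumes "\<forall>i<k. C i < C (Suc i)" "C 0 = 0" "C k = (1::real)" "i \<le> k"
  shows "0 \<le> C i \<and> C i \<le> 1"
  using C_mono[OF assms(1), of 0 i] C_mono[OF assms(1), of i k] assms
  by (cases "i = 0"; cases "i = k") auto

lemma Cok:
  assumes "\<forall>i<k. C i < C (Suc i)" "C 0 = 0" "C k = (1::real)" "\<sigma> permutes {1..k}" "l \<in> {1..k}"
  shows "0 \<le> C (\<sigma> l - 1) \<and> C (\<sigma> l - 1) < C (\<sigma> l) \<and> C (\<sigma> l) \<le> 1"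
proof -
  have s: "\<sigma> l \<in> {1..k}" using permutes_in_image[OF assms(4)] assms(5) by auto
  then have "C (\<sigma> l - 1) < C (\<sigma> l)" using C_mono[OF assms(1), of "\<sigma> l - 1" "\<sigma> l"] by auto
  moreover have "0 \<le> C (\<sigma> l - 1)" "C (\<sigma> l) \<le> 1" using C_range[OF assms(1-3)] s by auto
  ultimately show ?thesis by auto
qed

lemma closed_iff:
  fixes \<gamma> \<gamma>' :: "real \<Rightarrow> complex" and \<theta> :: "real \<Rightarrow> real" and C :: "nat \<Rightarrow> real"
  assumes g1: "\<forall>s\<in>{0..1}. (\<gamma> has_vector_derivative \<gamma>' s) (at s within {0..1})"
    and th: "\<forall>s\<in>{0..1}. \<gamma>' s = complex_of_real c * cis (\<theta> s)" and c: "c > 0"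
    and turning: "\<theta> 1 - \<theta> 0 = 2 * pi * of_int m"
    and perm: "\<sigma> permutes {1..k}" and k: "2 \<le> k"
    and C: "C 0 = 0" "C k = 1" "\<forall>i<k. C i < C (Suc i)"
  shows "closed_C1 (rearranged \<gamma> k \<sigma> C) \<longleftrightarrow> Nsum \<gamma> \<theta> C \<sigma> k = 0"
proof -
  define S1 where "S1 = C (\<sigma> 1 - 1)"
  have ok: "\<And>l. l \<in> {1..k} \<Longrightarrow> 0 \<le> C (\<sigma> l - 1) \<and> C (\<sigma> l - 1) < C (\<sigma> l) \<and> C (\<sigma> l) \<le> 1"
    using Cok[OF C(3) C(1) C(2) perm] by blast
  obtain f a b where fab: "Acc \<gamma> C \<sigma> k = (f,a,b)" "a < b" "2 \<le> k \<longrightarrow> a = 0"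
     "b - a = (\<Sum>l=1..k. C (\<sigma> l) - C (\<sigma> l - 1))" "f a = \<gamma> S1"
     "(f has_vector_derivative \<gamma>' S1) (at a within {a..b})"
     "f b = \<gamma> S1 + cis (\<theta> S1) * Nsum \<gamma> \<theta> C \<sigma> k"
     "(f has_vector_derivative (complex_of_real c * cis (\<theta> S1 + Aang \<theta> C \<sigma> (Suc k)))) (at b within {a..b})"
    using acc_inv[where k=k and j=k and \<sigma>=\<sigma> and C=C, OF g1 th c ok] k unfolding S1_def by auto
  have a0: "a = 0" using fab(3) k by simp
  have "(\<Sum>l=1..k. C (\<sigma> l) - C (\<sigma> l - 1)) = (\<Sum>i=1..k. C i - C (i - 1))"
    by (rule sum_perm[OF perm, of "\<lambda>i. C i - C (i - 1)"])
  also have "\<dots> = 1" using telescope[of C k] C by simp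
  finally have b1: "b = 1" using fab(4) a0 by simp
  have "Aang \<theta> C \<sigma> (Suc k) = (\<Sum>l=1..k. Dth \<theta> C (\<sigma> l))"
    unfolding Aang_def by (simp add: atLeastLessThanSuc_atLeastAtMost)
  also have "\<dots> = (\<Sum>i=1..k. \<theta> (C i) - \<theta> (C (i - 1)))"
    unfolding Dth_def by (rule sum_perm[OF perm, of "\<lambda>i. \<theta> (C i) - \<theta> (C (i - 1))"])
  also have "\<dots> = 2 * pi * of_int m" using telescope[of "\<lambda>i. \<theta> (C i)" k] C turning by simp
  finally have AK: "Aang \<theta> C \<sigma> (Suc k) = 2 * pi * of_int m" .
  have S1r: "S1 \<in> {0..1}" using ok[of 1] k by (auto simp: S1_def)
  have vd0: "vector_derivative f (at 0 within {0..1}) = \<gamma>' S1"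
    using vector_derivative_within_cbox[of 0 1 0 f] fab(6) a0 b1 by simp
  define w where "w = cis (- \<theta> S1)"
  have sg: "cnj (sgn (\<gamma>' S1)) = w" using th S1r c by (simp add: sgn_c_cis w_def cis_cnj)
  have r: "rearranged \<gamma> k \<sigma> C = (\<lambda>s. (f s - f 0) * w)"
    using fab(1) vd0 sg unfolding rearranged_def Acc_def[symmetric] a0 b1 by simp
  have dr0: "((\<lambda>s. (f s - f 0) * w) has_vector_derivative (\<gamma>' S1 * w)) (at 0 within {0..1})"
    using fab(6) a0 b1 by (auto intro!: derivative_eq_intros)
  have dr1: "((\<lambda>s. (f s - f 0) * w) has_vector_derivative (complex_of_real c * cis (\<theta> S1 + Aang \<theta> C \<sigma> (Suc k)) * w)) (at 1 within {0..1})"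
    using fab(8) a0 b1 by (auto intro!: derivative_eq_intros)
  have v0: "vector_derivative (\<lambda>s. (f s - f 0) * w) (at 0 within {0..1}) = \<gamma>' S1 * w"
    using vector_derivative_within_cbox[OF _ _ dr0[unfolded box_real(2)[symmetric]]] by simp
  have v1: "vector_derivative (\<lambda>s. (f s - f 0) * w) (at 1 within {0..1}) = complex_of_real c * cis (\<theta> S1 + Aang \<theta> C \<sigma> (Suc k)) * w"
    using vector_derivative_within_cbox[OF _ _ dr1[unfolded box_real(2)[symmetric]]] by simp
  have "\<gamma>' S1 * w = complex_of_real c * cis (\<theta> S1 + Aang \<theta> C \<sigma> (Suc k)) * w"
  proof -
    have "cis (\<theta> S1 + Aang \<theta> C \<sigma> (Suc k)) = cis (\<theta> S1)"
      unfolding AK cis_mult[symmetric] by simp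
    then show ?thesis using th S1r by simp
  qed
  then have vv: "vector_derivative (rearranged \<gamma> k \<sigma> C) (at 0 within {0..1}) = vector_derivative (rearranged \<gamma> k \<sigma> C) (at 1 within {0..1})"
    unfolding r v0 v1 by simp
  have "rearranged \<gamma> k \<sigma> C 1 - rearranged \<gamma> k \<sigma> C 0 = Nsum \<gamma> \<theta> C \<sigma> k"
    unfolding r using fab(7) fab(5) a0 b1 by (simp add: w_def mult.commute mult.left_commute cis_mult)
  then show ?thesis unfolding closed_C1_def using vv by (auto simp: r)
qed

lemma block:
  assumes "\<forall>l\<in>{i+1..i+j}. \<sigma> l = a + (l - i)"
  shows "Aang \<theta> C \<sigma> (i+j+1) = Aang \<theta> C \<sigma> (i+1) + \<theta> (C (a+j)) - \<theta> (C a) \<and>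
         Nsum \<gamma> \<theta> C \<sigma> (i+j) = Nsum \<gamma> \<theta> C \<sigma> i + cis (Aang \<theta> C \<sigma> (i+1) - \<theta> (C a)) * (\<gamma> (C (a+j)) - \<gamma> (C a))"
  using assms
proof (induction j)
  case 0
  then show ?case by simp
next
  case (Suc j)
  have IH: "Aang \<theta> C \<sigma> (i+j+1) = Aang \<theta> C \<sigma> (i+1) + \<theta> (C (a+j)) - \<theta> (C a)"
    "Nsum \<gamma> \<theta> C \<sigma> (i+j) = Nsum \<gamma> \<theta> C \<sigma> i + cis (Aang \<theta> C \<sigma> (i+1) - \<theta> (C a)) * (\<gamma> (C (a+j)) - \<gamma> (C a))"
    using Suc by auto
  have s: "\<sigma> (i + j + 1) = a + j + 1" using Suc.prems by auto
  have A: "Aang \<theta> C \<sigma> (i + Suc j + 1) = Aang \<theta> C \<sigma> (i+j+1) + Dth \<theta> C (\<sigma> (i+j+1))"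
    using Aang_Suc[of "i+j+1" \<theta> C \<sigma>] by simp
  have N: "Nsum \<gamma> \<theta> C \<sigma> (i + Suc j) = Nsum \<gamma> \<theta> C \<sigma> (i+j) + cis (Aang \<theta> C \<sigma> (i+j+1) - \<theta> (C (\<sigma> (i+j+1) - 1))) * Dg \<gamma> C (\<sigma> (i+j+1))"
    using Nsum_Suc[of \<gamma> \<theta> C \<sigma> "i+j"] by simp
  show ?case
  proof
    show "Aang \<theta> C \<sigma> (i + Suc j + 1) = Aang \<theta> C \<sigma> (i + 1) + \<theta> (C (a + Suc j)) - \<theta> (C a)"
      unfolding A IH(1) s by (simp add: Dth_def)
    have "cis (Aang \<theta> C \<sigma> (i+j+1) - \<theta> (C (\<sigma> (i+j+1) - 1))) = cis (Aang \<theta> C \<sigma> (i+1) - \<theta> (C a))"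
      unfolding IH(1) s by (simp add: algebra_simps)
    then show "Nsum \<gamma> \<theta> C \<sigma> (i + Suc j) = Nsum \<gamma> \<theta> C \<sigma> i + cis (Aang \<theta> C \<sigma> (i + 1) - \<theta> (C a)) * (\<gamma> (C (a + Suc j)) - \<gamma> (C a))"
      unfolding N IH(2) s by (simp add: Dg_def algebra_simps)
  qed
qed

lemma cyclic_Nsum_ne:
  assumes cyc: "is_cyclic_shift k \<sigma>" and C: "C 0 = 0" "C k = 1"
    and turning: "\<theta> 1 - \<theta> 0 = 2 * pi * of_int m" and V: "\<gamma> 1 \<noteq> \<gamma> 0"
  shows "Nsum \<gamma> \<theta> C \<sigma> k \<noteq> 0"
proof -
  obtain h where h: "h < k" "\<forall>i\<in>{1..k}. \<sigma> i = (if i \<le> k - h then i + h else i + h - k)"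
    using cyc unfolding is_cyclic_shift_def by blast
  have b1: "\<forall>l\<in>{0+1..0+(k-h)}. \<sigma> l = h + (l - 0)" using h by auto
  have b2: "\<forall>l\<in>{(k-h)+1..(k-h)+h}. \<sigma> l = 0 + (l - (k-h))" using h by auto
  note B1 = block[OF b1, of \<theta> C \<gamma>] and B2 = block[OF b2, of \<theta> C \<gamma>]
  have A1: "Aang \<theta> C \<sigma> (k-h+1) = \<theta> 1 - \<theta> (C h)" using B1 h C by (simp add: Aang_def)
  have N1: "Nsum \<gamma> \<theta> C \<sigma> (k-h) = cis (- \<theta> (C h)) * (\<gamma> 1 - \<gamma> (C h))" using B1 h C by (simp add: Aang_def Nsum_def)
  have "Nsum \<gamma> \<theta> C \<sigma> k = cis (- \<theta> (C h)) * (\<gamma> 1 - \<gamma> (C h)) + cis (\<theta> 1 - \<theta> (C h) - \<theta> 0) * (\<gamma> (C h) - \<gamma> 0)"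
    using B2 h C A1 N1 by simp
  also have "cis (\<theta> 1 - \<theta> (C h) - \<theta> 0) = cis (- \<theta> (C h))"
  proof -
    have "\<theta> 1 - \<theta> (C h) - \<theta> 0 = - \<theta> (C h) + 2 * pi * of_int m" using turning by simp
    then show ?thesis by (simp only: cis_mult[symmetric]) simp
  qed
  finally have "Nsum \<gamma> \<theta> C \<sigma> k = cis (- \<theta> (C h)) * (\<gamma> 1 - \<gamma> 0)" by (simp add: algebra_simps)
  then show ?thesis using V by simp
qed

definition scr :: "nat \<Rightarrow> nat \<Rightarrow> nat \<Rightarrow> int" where
  "scr jp jq jr = (if jr < jq then 1 else 0) + (if jq < jp then 1 else 0) - (if jr < jp then 1 else 0)"

lemma succ_prop:
  assumes perm: "\<sigma> permutes {1..k}" and k: "k \<ge> 3"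
    and A: "\<And>jp jq jr. jp \<in> {1..k} \<Longrightarrow> jq \<in> {1..k} \<Longrightarrow> jr \<in> {1..k} \<Longrightarrow>
              \<sigma> jp < \<sigma> jq \<Longrightarrow> \<sigma> jq < \<sigma> jr \<Longrightarrow> scr jp jq jr \<noteq> 1"
    and j: "1 \<le> j" "j < k"
  shows "\<sigma> (Suc j) = (if \<sigma> j = k then 1 else \<sigma> j + 1)"
proof (rule ccontr)
  assume ne: "\<sigma> (Suc j) \<noteq> (if \<sigma> j = k then 1 else \<sigma> j + 1)"
  define v where "v = (if \<sigma> j = k then 1 else \<sigma> j + 1)"
  have sj: "\<sigma> j \<in> {1..k}" using permutes_in_image[OF perm] j by auto
  have sj1: "\<sigma> (Suc j) \<in> {1..k}" using permutes_in_image[OF perm] j by auto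
  have "v \<in> {1..k}" using sj k by (auto simp: v_def)
  then obtain j' where j': "j' \<in> {1..k}" "\<sigma> j' = v"
    using permutes_surj[OF perm] by (metis permutes_image[OF perm] imageE)
  have inj: "inj_on \<sigma> {1..k}" using permutes_inj_on[OF perm] .
  have "\<sigma> (Suc j) \<noteq> \<sigma> j" using inj j by (auto dest: inj_onD)
  have "j' \<noteq> j" using j' sj k by (auto simp: v_def split: if_splits)
  moreover have "j' \<noteq> Suc j" using j' ne by (auto simp: v_def)
  ultimately have jj: "j' < j \<or> j' > Suc j" by auto
  have jr: "j \<in> {1..k}" "Suc j \<in> {1..k}" using j by auto
  show False
  proof (cases "\<sigma> j = k")
    case True
    then have "v = 1" by (simp add: v_def)
    have "1 < \<sigma> (Suc j)" "\<sigma> (Suc j) < k" using sj1 \<open>\<sigma> (Suc j) \<noteq> \<sigma> j\<close> True ne by (auto simp: v_def)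
    then have "scr j' (Suc j) j \<noteq> 1" using A[of j' "Suc j" j] j' jr True \<open>v = 1\<close> by auto
    then show False using jj by (auto simp: scr_def)
  next
    case False
    then have v: "v = \<sigma> j + 1" by (simp add: v_def)
    have "\<sigma> (Suc j) < \<sigma> j \<or> \<sigma> (Suc j) > \<sigma> j + 1" using \<open>\<sigma> (Suc j) \<noteq> \<sigma> j\<close> ne False by (auto simp: v_def)
    then show False
    proof
      assume "\<sigma> (Suc j) < \<sigma> j"
      then have "scr (Suc j) j j' \<noteq> 1" using A[of "Suc j" j j'] j' jr v by auto
      then show False using jj by (auto simp: scr_def)
    next
      assume "\<sigma> (Suc j) > \<sigma> j + 1"
      then have "scr j j' (Suc j) \<noteq> 1" using A[of j j' "Suc j"] j' jr v by auto
      then show False using jj by (auto simp: scr_def)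
    qed
  qed
qed

lemma noncyclic_triple:
  assumes perm: "\<sigma> permutes {1..k}" and k: "k \<ge> 3" and nc: "\<not> is_cyclic_shift k \<sigma>"
  shows "\<exists>jp jq jr. jp \<in> {1..k} \<and> jq \<in> {1..k} \<and> jr \<in> {1..k} \<and>
              \<sigma> jp < \<sigma> jq \<and> \<sigma> jq < \<sigma> jr \<and> scr jp jq jr = 1"
proof (rule ccontr)
  assume "\<not> ?thesis"
  then have A: "\<And>jp jq jr. jp \<in> {1..k} \<Longrightarrow> jq \<in> {1..k} \<Longrightarrow> jr \<in> {1..k} \<Longrightarrow>
              \<sigma> jp < \<sigma> jq \<Longrightarrow> \<sigma> jq < \<sigma> jr \<Longrightarrow> scr jp jq jr \<noteq> 1" by blast
  define h where "h = \<sigma> 1 - 1"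
  have s1: "\<sigma> 1 \<in> {1..k}" using permutes_in_image[OF perm] k by auto
  have hk: "h < k" using s1 by (auto simp: h_def)
  have "\<sigma> j = (if j \<le> k - h then j + h else j + h - k)" if "1 \<le> j" "j \<le> k" for j
    using that
  proof (induction j rule: nat_induct_at_least)
    case base
    then show ?case using s1 by (auto simp: h_def)
  next
    case (Suc j)
    then have IH: "\<sigma> j = (if j \<le> k - h then j + h else j + h - k)" by auto
    have "\<sigma> (Suc j) = (if \<sigma> j = k then 1 else \<sigma> j + 1)"
      using succ_prop[OF perm k A] Suc by auto
    then show ?case using IH hk Suc by (auto split: if_splits)
  qed
  then have "is_cyclic_shift k \<sigma>" unfolding is_cyclic_shift_def using hk by auto
  then show False using nc by blast
qed

definition C2 :: "nat \<Rightarrow> nat \<Rightarrow> real \<Rightarrow> nat \<Rightarrow> real" where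
  "C2 p q x i = (if i < p then 0 else if i < q then x else 1)"

lemma sum_one: "finite A \<Longrightarrow> (\<And>x. x \<in> A \<Longrightarrow> x \<noteq> u \<Longrightarrow> f x = 0) \<Longrightarrow> sum f A = (if u \<in> A then f u else 0)"
proof (cases "u \<in> A")
  case True
  assume "finite A" "\<And>x. x \<in> A \<Longrightarrow> x \<noteq> u \<Longrightarrow> f x = 0"
  then have "sum f A = sum f {u}" using True by (intro sum.mono_neutral_right) auto
  then show ?thesis using True by simp
next
  case False
  assume "finite A" "\<And>x. x \<in> A \<Longrightarrow> x \<noteq> u \<Longrightarrow> f x = 0"
  then show ?thesis using False by (simp, intro sum.neutral) auto
qed

lemma sum_two: "finite A \<Longrightarrow> u \<noteq> v \<Longrightarrow> u \<in> A \<Longrightarrow> v \<in> A \<Longrightarrow> (\<And>x. x \<in> A \<Longrightarrow> x \<noteq> u \<Longrightarrow> x \<noteq> v \<Longrightarrow> f x = 0) \<Longrightarrow> sum f A = f u + f v"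
proof -
  assume a: "finite A" "u \<noteq> v" "u \<in> A" "v \<in> A" "\<And>x. x \<in> A \<Longrightarrow> x \<noteq> u \<Longrightarrow> x \<noteq> v \<Longrightarrow> f x = 0"
  then have "sum f A = sum f {u,v}" by (intro sum.mono_neutral_right) auto
  then show ?thesis using a by simp
qed

lemma two_piece:
  assumes perm: "\<sigma> permutes {1..k}" and pq: "1 \<le> p" "p < q" "q \<le> k"
    and jpq: "jp \<in> {1..k}" "jq \<in> {1..k}" "\<sigma> jp = p" "\<sigma> jq = q"
    and turning: "\<theta> 1 - \<theta> 0 = 2 * pi * of_int m"
  shows "Nsum \<gamma> \<theta> (C2 p q x) \<sigma> k = cis (- \<theta> (if jq < jp then x else 0)) * (\<gamma> 1 - \<gamma> 0)"
proof -
  let ?C = "C2 p q x"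
  have inj: "inj_on \<sigma> {1..k}" using permutes_inj_on[OF perm] .
  have jne: "jp \<noteq> jq" using jpq pq by auto
  have van: "?C (\<sigma> l) = ?C (\<sigma> l - 1)" if "l \<in> {1..k}" "l \<noteq> jp" "l \<noteq> jq" for l
  proof -
    have "\<sigma> l \<noteq> p" using inj that jpq by (metis inj_onD)
    moreover have "\<sigma> l \<noteq> q" using inj that jpq by (metis inj_onD)
    moreover have "\<sigma> l \<ge> 1" using permutes_in_image[OF perm] that by auto
    ultimately show ?thesis by (auto simp: C2_def)
  qed
  have Cp: "?C p = x" "?C (p - 1) = 0" "?C q = 1" "?C (q - 1) = x" using pq by (auto simp: C2_def)
  have Ap: "Aang \<theta> ?C \<sigma> jp = (if jq < jp then \<theta> 1 - \<theta> x else 0)"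
  proof -
    have "Aang \<theta> ?C \<sigma> jp = (if jq \<in> {1..<jp} then Dth \<theta> ?C (\<sigma> jq) else 0)"
      unfolding Aang_def by (rule sum_one) (use van jpq in \<open>auto simp: Dth_def\<close>)
    then show ?thesis using jpq Cp by (auto simp: Dth_def)
  qed
  have Aq: "Aang \<theta> ?C \<sigma> jq = (if jp < jq then \<theta> x - \<theta> 0 else 0)"
  proof -
    have "Aang \<theta> ?C \<sigma> jq = (if jp \<in> {1..<jq} then Dth \<theta> ?C (\<sigma> jp) else 0)"
      unfolding Aang_def by (rule sum_one) (use van jpq in \<open>auto simp: Dth_def\<close>)
    then show ?thesis using jpq Cp by (auto simp: Dth_def)
  qed
  have N: "Nsum \<gamma> \<theta> ?C \<sigma> k = cis (Aang \<theta> ?C \<sigma> jp - \<theta> 0) * (\<gamma> x - \<gamma> 0) + cis (Aang \<theta> ?C \<sigma> jq - \<theta> x) * (\<gamma> 1 - \<gamma> x)"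
    unfolding Nsum_def
    by (subst sum_two[of _ jp jq]) (use jne jpq van Cp in \<open>auto simp: Dg_def\<close>)
  show ?thesis
  proof (cases "jq < jp")
    case True
    have "cis (\<theta> 1 - \<theta> x - \<theta> 0) = cis (- \<theta> x)"
    proof -
      have "\<theta> 1 - \<theta> x - \<theta> 0 = - \<theta> x + 2 * pi * of_int m" using turning by simp
      then show ?thesis by (simp only: cis_mult[symmetric]) simp
    qed
    then show ?thesis using True unfolding N Ap Aq by (simp add: algebra_simps)
  next
    case False
    then have "jp < jq" using jne by auto
    then show ?thesis using False unfolding N Ap Aq by (simp add: algebra_simps)
  qed
qed

lemma exp_const:
  fixes g :: "'a::topological_space \<Rightarrow> complex"
  assumes S: "connected S" and cg: "continuous_on S g" and e: "\<And>x. x \<in> S \<Longrightarrow> exp (g x) = w"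
    and xy: "x \<in> S" "y \<in> S"
  shows "g x = g y"
proof -
  have "g constant_on S"
  proof (rule continuous_discrete_range_constant[OF S cg])
    fix x assume x: "x \<in> S"
    show "\<exists>e>0. \<forall>y. y \<in> S \<and> g y \<noteq> g x \<longrightarrow> e \<le> norm (g y - g x)"
    proof (intro exI[of _ 1] conjI allI impI)
      fix y assume y: "y \<in> S \<and> g y \<noteq> g x"
      then have "exp (g y) = exp (g x)" using e x by auto
      then obtain n :: int where n: "g y = g x + (of_int (2 * n) * pi) * \<i>" using exp_eq by blast
      then have "n \<noteq> 0" using y by auto
      then have "1 \<le> \<bar>of_int (2 * n) * pi\<bar>"
      proof -
        have "1 \<le> \<bar>real_of_int (2*n)\<bar>" using \<open>n \<noteq> 0\<close> by linarith
        moreover have "1 \<le> pi" using pi_gt3 by linarith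
        ultimately have "1 * 1 \<le> \<bar>real_of_int (2*n)\<bar> * pi" by (intro mult_mono) auto
        then show ?thesis by (simp add: abs_mult)
      qed
      moreover have "norm (g y - g x) = \<bar>of_int (2 * n) * pi\<bar>"
        unfolding n by (simp add: norm_mult abs_mult)
      ultimately show "1 \<le> norm (g y - g x)" by simp
    qed simp
  qed
  then show ?thesis using xy unfolding constant_on_def by auto
qed

lemma side_lemma:
  fixes H L :: "'a::topological_space \<Rightarrow> complex" and \<pi> :: "real \<Rightarrow> 'a" and s :: "real \<Rightarrow> real"
    and \<theta> :: "real \<Rightarrow> real"
  assumes cH: "continuous_on T H" and cL: "continuous_on T L" and HL: "\<And>z. z \<in> T \<Longrightarrow> H z = exp (L z)"
    and c\<pi>: "continuous_on {0..1} \<pi>" and \<pi>T: "\<pi> ` {0..1} \<subseteq> T"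
    and cs: "continuous_on {0..1} s" and s01: "s ` {0..1} \<subseteq> {0..1}"
    and c\<theta>: "continuous_on {0..1} \<theta>" and V: "V \<noteq> 0"
    and close: "\<And>t. t \<in> {0..1} \<Longrightarrow> norm (H (\<pi> t) - cis (- \<theta> (s t)) * V) < norm V"
  shows "L (\<pi> 1) - L (\<pi> 0) = Ln (H (\<pi> 1) * cis (\<theta> (s 1)) / V) - Ln (H (\<pi> 0) * cis (\<theta> (s 0)) / V) - \<i> * (\<theta> (s 1) - \<theta> (s 0))"
proof -
  define Q where "Q t = H (\<pi> t) * cis (\<theta> (s t)) / V" for t
  define g where "g t = L (\<pi> t) - Ln (Q t) + \<i> * \<theta> (s t)" for t
  have Q1: "norm (Q t - 1) < 1" if "t \<in> {0..1}" for t
  proof -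
    have "Q t - 1 = (H (\<pi> t) - cis (- \<theta> (s t)) * V) * cis (\<theta> (s t)) / V"
      using V by (simp add: Q_def field_simps cis_mult)
    then have "norm (Q t - 1) = norm (H (\<pi> t) - cis (- \<theta> (s t)) * V) / norm V"
      by (simp add: norm_mult norm_divide)
    then show ?thesis using close[OF that] V by (simp add: divide_less_eq)
  qed
  have Qre: "0 < Re (Q t)" if "t \<in> {0..1}" for t
  proof -
    have "\<bar>Re (Q t - 1)\<bar> < 1" using Q1[OF that] abs_Re_le_cmod[of "Q t - 1"] by linarith
    then show ?thesis by simp
  qed
  have Qnz: "Q t \<notin> \<real>\<^sub>\<le>\<^sub>0" "Q t \<noteq> 0" if "t \<in> {0..1}" for t
    using Qre[OF that] by (auto simp: complex_nonpos_Reals_iff)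
  have cH\<pi>: "continuous_on {0..1} (\<lambda>t. H (\<pi> t))"
    by (rule continuous_on_compose2[OF cH c\<pi> \<pi>T])
  have cL\<pi>: "continuous_on {0..1} (\<lambda>t. L (\<pi> t))"
    by (rule continuous_on_compose2[OF cL c\<pi> \<pi>T])
  have c\<theta>s: "continuous_on {0..1} (\<lambda>t. \<theta> (s t))"
    by (rule continuous_on_compose2[OF c\<theta> cs s01])
  have cQ: "continuous_on {0..1} Q"
    unfolding Q_def by (intro continuous_intros cH\<pi> c\<theta>s) (use V in auto)
  have cg: "continuous_on {0..1} g"
    unfolding g_def by (intro continuous_intros cL\<pi> c\<theta>s cQ) (use Qnz in auto)
  have eg: "exp (g t) = V" if "t \<in> {0..1}" for t
  proof -
    have "exp (g t) = exp (L (\<pi> t)) / exp (Ln (Q t)) * exp (\<i> * \<theta> (s t))"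
      by (simp add: g_def exp_diff exp_add)
    also have "\<dots> = H (\<pi> t) / Q t * cis (\<theta> (s t))"
    proof -
      have "\<pi> t \<in> T" using \<pi>T that by auto
      then show ?thesis using HL[of "\<pi> t"] Qnz[OF that] by (simp add: cis_conv_exp)
    qed
    also have "\<dots> = V" using Qnz[OF that] V by (simp add: Q_def field_simps)
    finally show ?thesis .
  qed
  have "g 1 = g 0" by (rule exp_const[OF connected_Icc cg eg]) auto
  then show ?thesis by (simp add: g_def Q_def algebra_simps)
qed

lemma Nsum_cont:
  fixes F :: "'a::topological_space \<Rightarrow> nat \<Rightarrow> real"
  assumes c\<gamma>: "continuous_on {0..1} \<gamma>" and c\<theta>: "continuous_on {0..1} \<theta>"
    and perm: "\<sigma> permutes {1..k}"
    and cF: "\<And>i. i \<le> k \<Longrightarrow> continuous_on X (\<lambda>x. F x i)"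
    and rF: "\<And>x i. x \<in> X \<Longrightarrow> i \<le> k \<Longrightarrow> F x i \<in> {0..1}"
  shows "continuous_on X (\<lambda>x. Nsum \<gamma> \<theta> (F x) \<sigma> k)"
proof -
  have cc: "continuous_on X (\<lambda>x. g (F x i))" if "continuous_on {0..1} g" "i \<le> k" for g :: "real \<Rightarrow> 'b::topological_space" and i
    by (rule continuous_on_compose2[OF that(1) cF[OF that(2)]]) (use rF that(2) in auto)
  have sk: "\<sigma> l \<le> k" if "l \<in> {1..k}" for l using permutes_in_image[OF perm] that by auto
  show ?thesis unfolding Nsum_def Aang_def Dth_def Dg_def
  proof (rule continuous_on_sum)
    fix l assume l: "l \<in> {1..k}"
    have c1: "continuous_on X (\<lambda>x. \<Sum>l'=1..<l. \<theta> (F x (\<sigma> l')) - \<theta> (F x (\<sigma> l' - 1)))"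
    proof (rule continuous_on_sum)
      fix l' assume "l' \<in> {1..<l}"
      then have "\<sigma> l' \<le> k" using sk l by auto
      then show "continuous_on X (\<lambda>x. \<theta> (F x (\<sigma> l')) - \<theta> (F x (\<sigma> l' - 1)))"
        by (intro continuous_intros cc c\<theta>) auto
    qed
    show "continuous_on X (\<lambda>x. cis ((\<Sum>l'=1..<l. \<theta> (F x (\<sigma> l')) - \<theta> (F x (\<sigma> l' - 1))) - \<theta> (F x (\<sigma> l - 1))) * (\<gamma> (F x (\<sigma> l)) - \<gamma> (F x (\<sigma> l - 1))))"
      using sk[OF l] by (intro continuous_intros c1 cc c\<theta> c\<gamma>) auto
  qed
qed

lemma tri_compact: "compact {z::real\<times>real. 0 \<le> fst z \<and> fst z \<le> snd z \<and> snd z \<le> 1}" (is "compact ?T")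
proof -
  have "closed ?T"
    by (intro closed_Collect_conj closed_Collect_le continuous_intros)
  moreover have "bounded ?T"
  proof (rule bounded_subset[OF bounded_Times[OF compact_imp_bounded[OF compact_Icc] compact_imp_bounded[OF compact_Icc]]])
    show "?T \<subseteq> {0..1::real} \<times> {0..1::real}" by auto
  qed
  ultimately show ?thesis by (simp add: compact_eq_bounded_closed)
qed

lemma tri_convex: "convex {z::real\<times>real. 0 \<le> fst z \<and> fst z \<le> snd z \<and> snd z \<le> 1}"
  unfolding convex_def
proof (clarify)
  fix a1 b1 a2 b2 u v :: real
  assume h: "0 \<le> fst (a1, b1)" "fst (a1, b1) \<le> snd (a1, b1)" "snd (a1, b1) \<le> 1"
    "0 \<le> fst (a2, b2)" "fst (a2, b2) \<le> snd (a2, b2)" "snd (a2, b2) \<le> 1" "0 \<le> u" "0 \<le> v" "u + v = 1"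
  have "0 \<le> u * a1 + v * a2" using h by simp
  moreover have "u * a1 + v * a2 \<le> u * b1 + v * b2"
    using h by (intro add_mono mult_left_mono) auto
  moreover have "u * b1 + v * b2 \<le> u * 1 + v * 1"
    using h by (intro add_mono mult_left_mono) auto
  ultimately show "0 \<le> fst (u *\<^sub>R (a1, b1) + v *\<^sub>R (a2, b2)) \<and>
       fst (u *\<^sub>R (a1, b1) + v *\<^sub>R (a2, b2)) \<le> snd (u *\<^sub>R (a1, b1) + v *\<^sub>R (a2, b2)) \<and>
       snd (u *\<^sub>R (a1, b1) + v *\<^sub>R (a2, b2)) \<le> 1"
    using h by simp
qed

lemma cis_if01:
  assumes "\<theta> 1 - \<theta> 0 = 2 * pi * of_int m"
  shows "cis (\<theta> (if b then 1 else 0)) = cis (\<theta> 0)"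
proof -
  have "\<theta> 1 = \<theta> 0 + 2 * pi * of_int m" using assms by simp
  then have "cis (\<theta> 1) = cis (\<theta> 0)" by (simp only: cis_mult[symmetric]) simp
  then show ?thesis by simp
qed

lemma exists_closed:
  fixes \<gamma> :: "real \<Rightarrow> complex" and \<theta> :: "real \<Rightarrow> real"
  assumes c\<gamma>: "continuous_on {0..1} \<gamma>" and c\<theta>: "continuous_on {0..1} \<theta>"
    and turning: "\<theta> 1 - \<theta> 0 = 2 * pi * of_int m" and m: "m \<noteq> 0"
    and nclosed: "\<gamma> 0 \<noteq> \<gamma> 1" and k: "k \<ge> 3" and perm: "\<sigma> permutes {1..k}"
    and nc: "\<not> is_cyclic_shift k \<sigma>"
  shows "\<exists>C. C 0 = 0 \<and> C k = 1 \<and> (\<forall>i<k. C i < C (Suc i)) \<and> Nsum \<gamma> \<theta> C \<sigma> k = 0"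
proof (rule ccontr)
  assume contra: "\<not> ?thesis"
  obtain jp jq jr where J: "jp \<in> {1..k}" "jq \<in> {1..k}" "jr \<in> {1..k}" "\<sigma> jp < \<sigma> jq" "\<sigma> jq < \<sigma> jr" "scr jp jq jr = 1"
    using noncyclic_triple[OF perm k nc] by blast
  define p where "p = \<sigma> jp"
  define q where "q = \<sigma> jq"
  define r where "r = \<sigma> jr"
  have pqr: "1 \<le> p" "p < q" "q < r" "r \<le> k"
    using J permutes_in_image[OF perm, of jp] permutes_in_image[OF perm, of jr] by (auto simp: p_def q_def r_def)
  define V where "V = \<gamma> 1 - \<gamma> 0"
  have V: "V \<noteq> 0" using nclosed by (simp add: V_def)
  define T where "T = {z::real\<times>real. 0 \<le> fst z \<and> fst z \<le> snd z \<and> snd z \<le> 1}"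
  define C0 where "C0 z i = (if i < p then 0 else if i < q then fst z else if i < r then snd z else 1)" for z :: "real \<times> real" and i
  define Ce where "Ce e z i = (1 - e) * C0 z i + e * (real i / real k)" for e z i
  define \<Phi> where "\<Phi> x = Nsum \<gamma> \<theta> (Ce (fst x) (snd x)) \<sigma> k" for x :: "real \<times> (real \<times> real)"
  define K where "K = {0..1::real} \<times> T"
  have kpos: "real k > 0" using k by simp
  have C0r: "0 \<le> C0 z i \<and> C0 z i \<le> 1" if "z \<in> T" for z i
    using that by (auto simp: C0_def T_def)
  have C0m: "C0 z i \<le> C0 z (Suc i)" if "z \<in> T" for z i
    using that pqr by (auto simp: C0_def T_def)
  have Cer: "Ce e z i \<in> {0..1}" if "e \<in> {0..1}" "z \<in> T" "i \<le> k" for e z i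
  proof -
    have "real i / real k \<le> 1" using that kpos by (simp add: divide_le_eq_1)
    moreover have "0 \<le> real i / real k" by simp
    ultimately have a: "e * (real i / real k) \<le> e * 1" "0 \<le> e * (real i / real k)"
      using that(1) by (intro mult_left_mono mult_nonneg_nonneg; simp)+
    have b: "(1 - e) * C0 z i \<le> (1 - e) * 1" "0 \<le> (1 - e) * C0 z i"
      using C0r[OF that(2), of i] that(1) by (intro mult_left_mono mult_nonneg_nonneg; simp)+
    have "0 \<le> (1 - e) * C0 z i + e * (real i / real k) \<and> (1 - e) * C0 z i + e * (real i / real k) \<le> 1"
      using a b by (smt (verit))
    then show ?thesis by (simp add: Ce_def)
  qed
  have cC0: "continuous_on K (\<lambda>x. C0 (snd x) i)" for i
    by (cases "i < p"; cases "i < q"; cases "i < r") (auto simp: C0_def intro!: continuous_intros)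
  have c\<Phi>: "continuous_on K \<Phi>"
    unfolding \<Phi>_def
  proof (rule Nsum_cont[OF c\<gamma> c\<theta> perm])
    fix i show "continuous_on K (\<lambda>x. Ce (fst x) (snd x) i)"
      unfolding Ce_def by (intro continuous_intros cC0)
  next
    fix x i assume "x \<in> K" "i \<le> k"
    then show "Ce (fst x) (snd x) i \<in> {0..1}" using Cer by (auto simp: K_def)
  qed
  have "compact K" unfolding K_def T_def by (intro compact_Times compact_Icc tri_compact)
  then have "uniformly_continuous_on K \<Phi>" using c\<Phi> compact_uniformly_continuous by blast
  then obtain \<delta> where \<delta>: "\<delta> > 0" "\<And>x x'. x \<in> K \<Longrightarrow> x' \<in> K \<Longrightarrow> dist x' x < \<delta> \<Longrightarrow> dist (\<Phi> x') (\<Phi> x) < norm V"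
    unfolding uniformly_continuous_on_def using V by (metis zero_less_norm_iff)
  define \<epsilon> where "\<epsilon> = min (1/2) (\<delta>/2)"
  have \<epsilon>: "0 < \<epsilon>" "\<epsilon> \<le> 1/2" "\<epsilon> < \<delta>" using \<delta> by (auto simp: \<epsilon>_def)
  have close: "norm (\<Phi> (\<epsilon>, z) - \<Phi> (0, z)) < norm V" if "z \<in> T" for z
  proof -
    have "dist (\<epsilon>, z) (0, z) < \<delta>" using \<epsilon> by (simp add: dist_Pair_Pair)
    then have "dist (\<Phi> (\<epsilon>, z)) (\<Phi> (0, z)) < norm V"
      using \<delta>(2)[of "(0, z)" "(\<epsilon>, z)"] that \<epsilon> by (auto simp: K_def)
    then show ?thesis by (simp add: dist_norm)
  qed
  have Ce0: "Ce 0 z = C0 z" for z by (simp add: Ce_def fun_eq_iff)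
  have F1: "\<Phi> (0, (0, t)) = cis (- \<theta> (if jr < jq then t else 0)) * V" for t
  proof -
    have "Ce 0 (0, t) = C2 q r t" using pqr by (auto simp: Ce0 C0_def C2_def fun_eq_iff)
    then show ?thesis unfolding \<Phi>_def V_def
      using two_piece[OF perm _ pqr(3) pqr(4) J(2) J(3) q_def[symmetric] r_def[symmetric] turning] pqr by simp
  qed
  have F3: "\<Phi> (0, (t, 1)) = cis (- \<theta> (if jq < jp then t else 0)) * V" for t
  proof -
    have "Ce 0 (t, 1) = C2 p q t" using pqr by (auto simp: Ce0 C0_def C2_def fun_eq_iff)
    then show ?thesis unfolding \<Phi>_def V_def
      using two_piece[OF perm pqr(1) pqr(2) _ J(1) J(2) p_def[symmetric] q_def[symmetric] turning] pqr by simp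
  qed
  have F2: "\<Phi> (0, (t, t)) = cis (- \<theta> (if jr < jp then t else 0)) * V" for t
  proof -
    have "Ce 0 (t, t) = C2 p r t" using pqr by (auto simp: Ce0 C0_def C2_def fun_eq_iff)
    then show ?thesis unfolding \<Phi>_def V_def
      using two_piece[OF perm pqr(1) _ pqr(4) J(1) J(3) p_def[symmetric] r_def[symmetric] turning] pqr by simp
  qed
  define H where "H z = \<Phi> (\<epsilon>, z)" for z
  have Hnz: "H z \<noteq> 0" if "z \<in> T" for z
  proof
    assume H0: "H z = 0"
    have strict: "Ce \<epsilon> z i < Ce \<epsilon> z (Suc i)" for i
    proof -
      have "(1 - \<epsilon>) * C0 z i \<le> (1 - \<epsilon>) * C0 z (Suc i)"
        using C0m[OF that] \<epsilon> by (intro mult_left_mono) auto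
      moreover have "\<epsilon> * (real i / real k) < \<epsilon> * (real (Suc i) / real k)"
        using \<epsilon> kpos by (intro mult_strict_left_mono divide_strict_right_mono) auto
      ultimately show ?thesis by (simp add: Ce_def)
    qed
    have "Ce \<epsilon> z 0 = 0" using pqr by (simp add: Ce_def C0_def)
    moreover have "Ce \<epsilon> z k = 1" using pqr kpos by (simp add: Ce_def C0_def)
    moreover have "Nsum \<gamma> \<theta> (Ce \<epsilon> z) \<sigma> k = 0" using H0 by (simp add: H_def \<Phi>_def)
    ultimately show False using contra strict by blast
  qed
  have cH: "continuous_on T H"
    unfolding H_def
    by (rule continuous_on_compose2[OF c\<Phi>, of _ "\<lambda>z. (\<epsilon>, z)"]) (use \<epsilon> in \<open>auto intro!: continuous_intros simp: K_def\<close>)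
  have "Borsukian T" unfolding T_def by (rule convex_imp_Borsukian[OF tri_convex])
  then obtain L where cL: "continuous_on T L" and HL: "\<And>z. z \<in> T \<Longrightarrow> H z = exp (L z)"
    using cH Hnz unfolding Borsukian_continuous_logarithm by (metis ComplI Pi_I singletonD)
  define \<Lambda> where "\<Lambda> z = Ln (H z * cis (\<theta> 0) / V)" for z
  have cis1: "cis (\<theta> (if b then 1 else 0)) = cis (\<theta> 0)" for b using cis_if01[OF turning] .
  have c1: "cis (\<theta> 1) = cis (\<theta> 0)" using cis1[of True] by simp
  have clH: "norm (H z - \<Phi> (0, z)) < norm V" if "z \<in> T" for z using close[OF that] by (simp add: H_def)
  have cif: "continuous_on {0..1} (\<lambda>t::real. if b then t else 0)" for b
    by (cases b) (auto intro: continuous_intros)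
  have cif2: "continuous_on {0..1} (\<lambda>t::real. if b then 1 - t else 0)" for b
    by (cases b) (auto intro!: continuous_intros)
  have S1: "L (0, 1) - L (0, 0) = \<Lambda> (0, 1) - \<Lambda> (0, 0) - \<i> * (\<theta> (if jr < jq then 1 else 0) - \<theta> 0)"
  proof -
    have "L ((\<lambda>t. (0::real, t)) 1) - L ((\<lambda>t. (0::real, t)) 0) = Ln (H ((\<lambda>t. (0::real, t)) 1) * cis (\<theta> ((\<lambda>t. if jr < jq then t else 0) 1)) / V)
      - Ln (H ((\<lambda>t. (0::real, t)) 0) * cis (\<theta> ((\<lambda>t. if jr < jq then t else 0) 0)) / V)
      - \<i> * (\<theta> ((\<lambda>t. if jr < jq then t else 0) 1) - \<theta> ((\<lambda>t. if jr < jq then t else 0) 0))"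
    proof (rule side_lemma[OF cH cL HL _ _ cif _ c\<theta> V])
      show "continuous_on {0..1} (\<lambda>t. (0::real, t))" by (intro continuous_intros)
      show "(\<lambda>t. (0::real, t)) ` {0..1} \<subseteq> T" by (auto simp: T_def)
      show "(\<lambda>t::real. if jr < jq then t else 0) ` {0..1} \<subseteq> {0..1::real}" by auto
      fix t :: real assume "t \<in> {0..1}"
      then show "norm (H (0, t) - cis (- \<theta> (if jr < jq then t else 0)) * V) < norm V"
        using clH[of "(0,t)"] F1[of t] by (auto simp: T_def)
    qed
    then show ?thesis using cis1[of "jr < jq"] by (simp add: \<Lambda>_def c1)
  qed
  have S3: "L (1, 1) - L (0, 1) = \<Lambda> (1, 1) - \<Lambda> (0, 1) - \<i> * (\<theta> (if jq < jp then 1 else 0) - \<theta> 0)"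
  proof -
    have "L ((\<lambda>t. (t, 1::real)) 1) - L ((\<lambda>t. (t, 1::real)) 0) = Ln (H ((\<lambda>t. (t, 1::real)) 1) * cis (\<theta> ((\<lambda>t. if jq < jp then t else 0) 1)) / V)
      - Ln (H ((\<lambda>t. (t, 1::real)) 0) * cis (\<theta> ((\<lambda>t. if jq < jp then t else 0) 0)) / V)
      - \<i> * (\<theta> ((\<lambda>t. if jq < jp then t else 0) 1) - \<theta> ((\<lambda>t. if jq < jp then t else 0) 0))"
    proof (rule side_lemma[OF cH cL HL _ _ cif _ c\<theta> V])
      show "continuous_on {0..1} (\<lambda>t. (t, 1::real))" by (intro continuous_intros)
      show "(\<lambda>t. (t, 1::real)) ` {0..1} \<subseteq> T" by (auto simp: T_def)
      show "(\<lambda>t::real. if jq < jp then t else 0) ` {0..1} \<subseteq> {0..1::real}" by auto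
      fix t :: real assume "t \<in> {0..1}"
      then show "norm (H (t, 1) - cis (- \<theta> (if jq < jp then t else 0)) * V) < norm V"
        using clH[of "(t,1)"] F3[of t] by (auto simp: T_def)
    qed
    then show ?thesis using cis1[of "jq < jp"] by (simp add: \<Lambda>_def c1)
  qed
  have S2: "L (0, 0) - L (1, 1) = \<Lambda> (0, 0) - \<Lambda> (1, 1) - \<i> * (\<theta> 0 - \<theta> (if jr < jp then 1 else 0))"
  proof -
    have "L ((\<lambda>t. (1 - t, 1 - t::real)) 1) - L ((\<lambda>t. (1 - t, 1 - t::real)) 0) = Ln (H ((\<lambda>t. (1 - t, 1 - t::real)) 1) * cis (\<theta> ((\<lambda>t. if jr < jp then 1 - t else 0) 1)) / V)
      - Ln (H ((\<lambda>t. (1 - t, 1 - t::real)) 0) * cis (\<theta> ((\<lambda>t. if jr < jp then 1 - t else 0) 0)) / V)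
      - \<i> * (\<theta> ((\<lambda>t. if jr < jp then 1 - t else 0) 1) - \<theta> ((\<lambda>t. if jr < jp then 1 - t else 0) 0))"
    proof (rule side_lemma[OF cH cL HL _ _ cif2 _ c\<theta> V])
      show "continuous_on {0..1} (\<lambda>t. (1 - t, 1 - t::real))" by (intro continuous_intros)
      show "(\<lambda>t. (1 - t, 1 - t::real)) ` {0..1} \<subseteq> T" by (auto simp: T_def)
      show "(\<lambda>t::real. if jr < jp then 1 - t else 0) ` {0..1} \<subseteq> {0..1::real}" by auto
      fix t :: real assume "t \<in> {0..1}"
      then show "norm (H (1 - t, 1 - t) - cis (- \<theta> (if jr < jp then 1 - t else 0)) * V) < norm V"
        using clH[of "(1-t,1-t)"] F2[of "1-t"] by (auto simp: T_def)
    qed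
    then show ?thesis using cis1[of "jr < jp"] by (simp add: \<Lambda>_def c1)
  qed
  define a1 where "a1 = \<theta> (if jr < jq then 1 else 0)"
  define a2 where "a2 = \<theta> (if jr < jp then 1 else 0)"
  define a3 where "a3 = \<theta> (if jq < jp then 1 else 0)"
  have "a1 + a3 - a2 - \<theta> 0 = \<theta> 1 - \<theta> 0"
    using J(6) by (auto simp: scr_def a1_def a2_def a3_def split: if_splits)
  moreover have "\<i> * (complex_of_real a1 + complex_of_real a3 - complex_of_real a2 - complex_of_real (\<theta> 0)) = 0"
    using S1 S2 S3 unfolding a1_def[symmetric] a2_def[symmetric] a3_def[symmetric] of_real_diff by algebra
  then have "complex_of_real (a1 + a3 - a2 - \<theta> 0) = 0" by simp
  ultimately have "\<theta> 1 - \<theta> 0 = 0" by (metis of_real_eq_0_iff)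
  then show False using turning m by simp
qed

theorem theorem4p1:
  fixes \<gamma> \<gamma>' :: "real \<Rightarrow> complex" and \<theta> :: "real \<Rightarrow> real" and c :: real
    and m :: int and k :: nat and \<sigma> :: "nat \<Rightarrow> nat"
  assumes deriv: "\<forall>s\<in>{0..1}. (\<gamma> has_vector_derivative \<gamma>' s) (at s within {0..1})"
    and C1: "continuous_on {0..1} \<gamma>'"
    and c_pos: "c > 0"
    and speed: "\<forall>s\<in>{0..1}. norm (\<gamma>' s) = c"
    and not_closed: "\<gamma> 0 \<noteq> \<gamma> 1"
    and theta_cont: "continuous_on {0..1} \<theta>"
    and theta: "\<forall>s\<in>{0..1}. \<gamma>' s = complex_of_real c * cis (\<theta> s)"
    and turning: "\<theta> 1 - \<theta> 0 = 2 * pi * of_int m"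
    and m_nz: "m \<noteq> 0"
    and k: "k \<ge> 3"
    and perm: "\<sigma> permutes {1..k}"
  shows "(\<exists>C :: nat \<Rightarrow> real. C 0 = 0 \<and> C k = 1 \<and> (\<forall>i<k. C i < C (Suc i)) \<and>
            closed_C1 (rearranged \<gamma> k \<sigma> C))
         \<longleftrightarrow> \<not> is_cyclic_shift k \<sigma>"
proof
  assume "\<exists>C :: nat \<Rightarrow> real. C 0 = 0 \<and> C k = 1 \<and> (\<forall>i<k. C i < C (Suc i)) \<and> closed_C1 (rearranged \<gamma> k \<sigma> C)"
  then obtain C :: "nat \<Rightarrow> real" where C: "C 0 = 0" "C k = 1" "\<forall>i<k. C i < C (Suc i)" "closed_C1 (rearranged \<gamma> k \<sigma> C)"
    by blast
  have "Nsum \<gamma> \<theta> C \<sigma> k = 0"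
    using closed_iff[OF deriv theta c_pos turning perm _ C(1) C(2) C(3)] C(4) k by simp
  then show "\<not> is_cyclic_shift k \<sigma>"
    using cyclic_Nsum_ne[OF _ C(1) C(2) turning] not_closed by metis
next
  assume nc: "\<not> is_cyclic_shift k \<sigma>"
  have c\<gamma>: "continuous_on {0..1} \<gamma>"
    unfolding continuous_on_eq_continuous_within
    using deriv has_vector_derivative_continuous by blast
  obtain C where C: "C 0 = 0" "C k = 1" "\<forall>i<k. C i < C (Suc i)" "Nsum \<gamma> \<theta> C \<sigma> k = 0"
    using exists_closed[OF c\<gamma> theta_cont turning m_nz not_closed k perm nc] by blast
  have "closed_C1 (rearranged \<gamma> k \<sigma> C)"
    using closed_iff[OF deriv theta c_pos turning perm _ C(1) C(2) C(3)] C(4) k by simp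
  then show "\<exists>C :: nat \<Rightarrow> real. C 0 = 0 \<and> C k = 1 \<and> (\<forall>i<k. C i < C (Suc i)) \<and> closed_C1 (rearranged \<gamma> k \<sigma> C)"
    using C by blast
qed

end
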